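(* Let $f:\Omega_D\to A$ be a function. If there exists $I\in\mathbb T$ such that \[f(\alpha+\beta J)=\sum_{H\in\mathscr P(\tau)}\gamma_H\,f(\alpha+\overline\beta^H I),\qquad \gamma_H:=2^{-\tau}\sum_{K\in\mathscr P(\tau)}(-1)^{|K\cap H|}J_KI_K^{-1},\] for all $(\alpha,\beta)\in D$ and all $J\in\mathbb T$, then $f$ is a $T$-function.
   Context: $A$ is a finite-dimensional associative real algebra with unit and a $*$-involution $x\mapsto x^c$; $\mathbb S_A=\{x: x+x^c=0, xx^c=1\}\neq\emptyset$. $V\subseteq A$ has a basis $(v_0=1,v_1,\dots,v_N)$, $N\geq1$, with $v_s\in\mathbb S_A$ pairwise anticommuting for $s\ge1$, and $V\subseteq\bigcup_{J\in\mathbb S_A}(\mathbb R+J\mathbb R)$; $A$ carries the Euclidean norm making a completion of this basis orthonormal. $\mathbb R_{\ell,m}=\mathrm{Span}_{\mathbb R}(v_\ell,\dots,v_m)$, $\mathbb S_{\ell,m}$ its unit sphere. $T=(t_0,\dots,t_\tau)$, $0\le t_0<\dots<t_\tau=N$, with torus $\mathbb T=\mathbb S_{t_0+1,t_1}\times\cdots\times\mathbb S_{t_{\tau-1}+1,t_\tau}$ (for $\tau=0$ the single index $J=\emptyset$). For $J\in\mathbb T$, $\beta\in\mathbb R^\tau$: $\beta J=\sum_h\beta_hJ_h$; $\mathscr P(\tau)$ the power set of $\{1,\dots,\tau\}$; $J_\emptyset=1$ and $J_K=J_{k_1}\cdots J_{k_p}$ for $K=\{k_1<\dots<k_p\}$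 (invertible, with inverse $I_K^{-1}$ for $I\in\mathbb T$); $\overline\beta^H$ is $\beta$ with $\beta_h$ replaced by $-\beta_h$ for every $h\in H$, and $\overline\beta^h=\overline\beta^{\{h\}}$. $D\subseteq\mathbb R_{0,t_0}\times\mathbb R^\tau$ is invariant under $(\alpha,\beta)\mapsto(\alpha,\overline\beta^h)$ for every $h$, and $\Omega_D=\{\alpha+\beta J:(\alpha,\beta)\in D,J\in\mathbb T\}$. A $T$-stem function is $F=\sum_{K}E_KF_K:D\to A\otimes\mathbb R^{2^\tau}$ ($E_K$ canonical basis of $\mathbb R^{2^\tau}$) with $F_K(\alpha,\overline\beta^h)=F_K(\alpha,\beta)$ if $h\notin K$ and $=-F_K(\alpha,\beta)$ if $h\in K$. A $T$-function is a function $\Omega_D\to A$ of the form $\alpha+\beta J\mapsto\sum_KJ_KF_K(\alpha,\beta)$ for some $T$-stem function $F$. *)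

theory Defs
  imports "HOL-Analysis.Analysis"
begin

definition star_involution :: "('a::real_algebra_1 \<Rightarrow> 'a) \<Rightarrow> bool" where
  "star_involution cj \<longleftrightarrow> linear cj \<and> (\<forall>x. cj (cj x) = x)
     \<and> (\<forall>x y. cj (x * y) = cj y * cj x) \<and> cj 1 = 1"

definition finite_dim_alg :: "'a::real_algebra_1 itself \<Rightarrow> bool" where
  "finite_dim_alg _ \<longleftrightarrow> (\<exists>B::'a set. finite B \<and> span B = UNIV)"

definition imag_units :: "('a::real_algebra_1 \<Rightarrow> 'a) \<Rightarrow> 'a set" where
  "imag_units cj = {x. x + cj x = 0 \<and> x * cj x = 1}"

definition good_basis :: "('a::real_algebra_1 \<Rightarrow> 'a) \<Rightarrow> (nat \<Rightarrow> 'a) \<Rightarrow> nat \<Rightarrow> bool" where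
  "good_basis cj v N \<longleftrightarrow> 1 \<le> N \<and> inj_on v {0..N} \<and> independent (v ` {0..N}) \<and> v 0 = 1
     \<and> (\<forall>s\<in>{1..N}. v s \<in> imag_units cj)
     \<and> (\<forall>s\<in>{1..N}. \<forall>r\<in>{1..N}. s \<noteq> r \<longrightarrow> v s * v r = - (v r * v s))
     \<and> (\<forall>x\<in>span (v ` {0..N}). \<exists>J\<in>imag_units cj. \<exists>a b. x = of_real a + b *\<^sub>R J)"

definition Rlm :: "(nat \<Rightarrow> 'a::real_algebra_1) \<Rightarrow> nat \<Rightarrow> nat \<Rightarrow> 'a set" where
  "Rlm v l m = span (v ` {l..m})"

definition Slm :: "(nat \<Rightarrow> 'a::real_algebra_1) \<Rightarrow> nat \<Rightarrow> nat \<Rightarrow> 'a set" where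
  "Slm v l m = {(\<Sum>i\<in>{l..m}. x i *\<^sub>R v i) | x. (\<Sum>i\<in>{l..m}. (x i)\<^sup>2) = 1}"

definition good_partition :: "nat \<Rightarrow> (nat \<Rightarrow> nat) \<Rightarrow> nat \<Rightarrow> bool" where
  "good_partition N t \<tau> \<longleftrightarrow> (\<forall>i<\<tau>. t i < t (Suc i)) \<and> t \<tau> = N"

text \<open>The torus: tuples J = (J_1, ..., J_tau), represented as functions nat => 'a vanishing
  outside {1..tau} (for tau = 0 the single element is the empty tuple).\<close>
definition torus :: "(nat \<Rightarrow> 'a::real_algebra_1) \<Rightarrow> (nat \<Rightarrow> nat) \<Rightarrow> nat \<Rightarrow> (nat \<Rightarrow> 'a) set" where
  "torus v t \<tau> = {J. (\<forall>h\<in>{1..\<tau>}. J h \<in> Slm v (t (h - 1) + 1) (t h)) \<and> (\<forall>h. h \<notin> {1..\<tau>} \<longrightarrow> J h = 0)}"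

definition bJ :: "nat \<Rightarrow> (nat \<Rightarrow> real) \<Rightarrow> (nat \<Rightarrow> 'a::real_algebra_1) \<Rightarrow> 'a" where
  "bJ \<tau> \<beta> J = (\<Sum>h\<in>{1..\<tau>}. \<beta> h *\<^sub>R J h)"

definition JK :: "(nat \<Rightarrow> 'a::real_algebra_1) \<Rightarrow> nat set \<Rightarrow> 'a" where
  "JK J K = prod_list (map J (sorted_list_of_set K))"

definition rinv :: "'a::real_algebra_1 \<Rightarrow> 'a" where
  "rinv x = (THE y. x * y = 1 \<and> y * x = 1)"

definition flip :: "nat set \<Rightarrow> (nat \<Rightarrow> real) \<Rightarrow> nat \<Rightarrow> real" where
  "flip H \<beta> = (\<lambda>h. if h \<in> H then - \<beta> h else \<beta> h)"

definition good_domain :: "(nat \<Rightarrow> 'a::real_algebra_1) \<Rightarrow> (nat \<Rightarrow> nat) \<Rightarrow> nat \<Rightarrow> ('a \<times> (nat \<Rightarrow> real)) set \<Rightarrow> bool" where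
  "good_domain v t \<tau> D \<longleftrightarrow>
     (\<forall>(\<alpha>, \<beta>)\<in>D. \<alpha> \<in> Rlm v 0 (t 0) \<and> (\<forall>h. h \<notin> {1..\<tau>} \<longrightarrow> \<beta> h = 0))
     \<and> (\<forall>(\<alpha>, \<beta>)\<in>D. \<forall>h\<in>{1..\<tau>}. (\<alpha>, flip {h} \<beta>) \<in> D)"

definition OmegaD :: "(nat \<Rightarrow> 'a::real_algebra_1) \<Rightarrow> (nat \<Rightarrow> nat) \<Rightarrow> nat \<Rightarrow> ('a \<times> (nat \<Rightarrow> real)) set \<Rightarrow> 'a set" where
  "OmegaD v t \<tau> D = {\<alpha> + bJ \<tau> \<beta> J | \<alpha> \<beta> J. (\<alpha>, \<beta>) \<in> D \<and> J \<in> torus v t \<tau>}"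

definition stem_function :: "nat \<Rightarrow> ('a \<times> (nat \<Rightarrow> real)) set \<Rightarrow> (nat set \<Rightarrow> 'a \<times> (nat \<Rightarrow> real) \<Rightarrow> 'a::real_algebra_1) \<Rightarrow> bool" where
  "stem_function \<tau> D F \<longleftrightarrow>
     (\<forall>K\<in>Pow {1..\<tau>}. \<forall>(\<alpha>, \<beta>)\<in>D. \<forall>h\<in>{1..\<tau>}.
        F K (\<alpha>, flip {h} \<beta>) = (if h \<in> K then - F K (\<alpha>, \<beta>) else F K (\<alpha>, \<beta>)))"

definition T_function :: "(nat \<Rightarrow> 'a::real_algebra_1) \<Rightarrow> (nat \<Rightarrow> nat) \<Rightarrow> nat \<Rightarrow> ('a \<times> (nat \<Rightarrow> real)) set \<Rightarrow> ('a \<Rightarrow> 'a) \<Rightarrow> bool" where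
  "T_function v t \<tau> D f \<longleftrightarrow> (\<exists>F. stem_function \<tau> D F \<and>
     (\<forall>(\<alpha>, \<beta>)\<in>D. \<forall>J\<in>torus v t \<tau>. f (\<alpha> + bJ \<tau> \<beta> J) = (\<Sum>K\<in>Pow {1..\<tau>}. JK J K * F K (\<alpha>, \<beta>))))"

definition gammaH :: "nat \<Rightarrow> (nat \<Rightarrow> 'a::real_algebra_1) \<Rightarrow> (nat \<Rightarrow> 'a) \<Rightarrow> nat set \<Rightarrow> 'a" where
  "gammaH \<tau> J I H = (1 / 2 ^ \<tau>) *\<^sub>R (\<Sum>K\<in>Pow {1..\<tau>}. ((-1) ^ card (K \<inter> H)) *\<^sub>R (JK J K * rinv (JK I K)))"

end

theory Submission
  imports Defs
begin

lemma flip_tog: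
  "flip H (flip {h} \<beta>) = flip (if h \<in> H then H - {h} else insert h H) \<beta>"
  by (auto simp: flip_def fun_eq_iff)

lemma sign_tog:
  assumes "finite K"
  shows "((-1::real) ^ card (K \<inter> (if h \<in> H then H - {h} else insert h H)))
      = (if h \<in> K then - ((-1) ^ card (K \<inter> H)) else (-1) ^ card (K \<inter> H))"
proof (cases "h \<in> K")
  case False
  then have "K \<inter> (if h \<in> H then H - {h} else insert h H) = K \<inter> H" by auto
  then show ?thesis using False by simp
next
  case True
  show ?thesis
  proof (cases "h \<in> H")
    case True2: True
    have e: "K \<inter> (if h \<in> H then H - {h} else insert h H) = (K \<inter> H) - {h}" using True2 by auto
    have c: "card (K \<inter> H) = Suc (card ((K \<inter> H) - {h}))"
      using True True2 assms by (metis IntI card_Suc_Diff1 finite_Int)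
    have "((-1::real) ^ card (K \<inter> (if h \<in> H then H - {h} else insert h H))) = (-1) ^ card ((K \<inter> H) - {h})"
      using e by simp
    also have "\<dots> = - ((-1) ^ card (K \<inter> H))" by (simp only: c power_Suc)
    finally show ?thesis using True by simp
  next
    case False
    have e: "K \<inter> (insert h H) = insert h (K \<inter> H)" using True by auto
    show ?thesis using True False assms by (simp add: e)
  qed
qed

theorem proposition2p35:
  fixes cj :: "'a::real_algebra_1 \<Rightarrow> 'a" and v :: "nat \<Rightarrow> 'a" and N :: nat
    and t :: "nat \<Rightarrow> nat" and \<tau> :: nat and D :: "('a \<times> (nat \<Rightarrow> real)) set"
    and f :: "'a \<Rightarrow> 'a"
  assumes "finite_dim_alg TYPE('a)"
    and "star_involution cj"
    and "imag_units cj \<noteq> {}"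
    and "good_basis cj v N"
    and "good_partition N t \<tau>"
    and "good_domain v t \<tau> D"
    and "\<exists>I\<in>torus v t \<tau>. \<forall>(\<alpha>, \<beta>)\<in>D. \<forall>J\<in>torus v t \<tau>.
           f (\<alpha> + bJ \<tau> \<beta> J) = (\<Sum>H\<in>Pow {1..\<tau>}. gammaH \<tau> J I H * f (\<alpha> + bJ \<tau> (flip H \<beta>) I))"
  shows "T_function v t \<tau> D f"
proof -
  obtain I where hI: "\<forall>(\<alpha>, \<beta>)\<in>D. \<forall>J\<in>torus v t \<tau>.
           f (\<alpha> + bJ \<tau> \<beta> J) = (\<Sum>H\<in>Pow {1..\<tau>}. gammaH \<tau> J I H * f (\<alpha> + bJ \<tau> (flip H \<beta>) I))"
    using assms(7) by blast
  define F where "F = (\<lambda>K (p::'a \<times> (nat \<Rightarrow> real)). (1 / 2 ^ \<tau>) *\<^sub>R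
     (\<Sum>H\<in>Pow {1..\<tau>}. ((-1::real) ^ card (K \<inter> H)) *\<^sub>R (rinv (JK I K) * f (fst p + bJ \<tau> (flip H (snd p)) I))))"
  have key: "F K (\<alpha>, flip {h} \<beta>) = (if h \<in> K then - F K (\<alpha>, \<beta>) else F K (\<alpha>, \<beta>))"
    if K: "K \<in> Pow {1..\<tau>}" and h: "h \<in> {1..\<tau>}" for K \<alpha> \<beta> h
  proof -
    have fK: "finite K" using K finite_subset by auto
    define g where "g = (\<lambda>H::nat set. if h \<in> H then H - {h} else insert h H)"
    have gg: "g (g H) = H" for H unfolding g_def by auto
    have gP: "H \<in> Pow {1..\<tau>} \<Longrightarrow> g H \<in> Pow {1..\<tau>}" for H using h unfolding g_def by auto
    let ?G = "\<lambda>H. ((-1::real) ^ card (K \<inter> H)) *\<^sub>R (rinv (JK I K) * f (\<alpha> + bJ \<tau> (flip H \<beta>) I))"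
    have "(\<Sum>H\<in>Pow {1..\<tau>}. ((-1::real) ^ card (K \<inter> H)) *\<^sub>R (rinv (JK I K) * f (\<alpha> + bJ \<tau> (flip H (flip {h} \<beta>)) I)))
        = (\<Sum>H\<in>Pow {1..\<tau>}. ((-1::real) ^ card (K \<inter> H)) *\<^sub>R (rinv (JK I K) * f (\<alpha> + bJ \<tau> (flip (g H) \<beta>) I)))"
      by (simp add: flip_tog g_def)
    also have "\<dots> = (\<Sum>H\<in>Pow {1..\<tau>}. ((-1::real) ^ card (K \<inter> g H)) *\<^sub>R (rinv (JK I K) * f (\<alpha> + bJ \<tau> (flip H \<beta>) I)))"
      by (rule sum.reindex_bij_witness[where i=g and j=g]) (simp_all only: gg gP)
    also have "\<dots> = (if h \<in> K then - (\<Sum>H\<in>Pow {1..\<tau>}. ?G H) else (\<Sum>H\<in>Pow {1..\<tau>}. ?G H))"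
      using sign_tog[OF fK, of h] unfolding g_def
      by (simp add: sum_negf[symmetric])
    finally show "F K (\<alpha>, flip {h} \<beta>) = (if h \<in> K then - F K (\<alpha>, \<beta>) else F K (\<alpha>, \<beta>))"
      unfolding F_def by simp
  qed
  have stem: "stem_function \<tau> D F"
    unfolding stem_function_def using key by auto
  have eq: "f (\<alpha> + bJ \<tau> \<beta> J) = (\<Sum>K\<in>Pow {1..\<tau>}. JK J K * F K (\<alpha>, \<beta>))"
    if "(\<alpha>, \<beta>) \<in> D" "J \<in> torus v t \<tau>" for \<alpha> \<beta> J
  proof -
    have "f (\<alpha> + bJ \<tau> \<beta> J) = (\<Sum>H\<in>Pow {1..\<tau>}. gammaH \<tau> J I H * f (\<alpha> + bJ \<tau> (flip H \<beta>) I))"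
      using hI that by auto
    also have "\<dots> = (\<Sum>H\<in>Pow {1..\<tau>}. \<Sum>K\<in>Pow {1..\<tau>}. JK J K * ((1 / 2 ^ \<tau>) *\<^sub>R (((-1::real) ^ card (K \<inter> H)) *\<^sub>R (rinv (JK I K) * f (\<alpha> + bJ \<tau> (flip H \<beta>) I)))))"
      unfolding gammaH_def scaleR_sum_right sum_distrib_right
      by (simp add: mult.assoc)
    also have "\<dots> = (\<Sum>K\<in>Pow {1..\<tau>}. \<Sum>H\<in>Pow {1..\<tau>}. JK J K * ((1 / 2 ^ \<tau>) *\<^sub>R (((-1::real) ^ card (K \<inter> H)) *\<^sub>R (rinv (JK I K) * f (\<alpha> + bJ \<tau> (flip H \<beta>) I)))))"
      by (rule sum.swap)
    also have "\<dots> = (\<Sum>K\<in>Pow {1..\<tau>}. JK J K * F K (\<alpha>, \<beta>))"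
      unfolding F_def by (simp add: scaleR_sum_right sum_distrib_left)
    finally show ?thesis .
  qed
  show ?thesis unfolding T_function_def using stem eq by blast
qed

end
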